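(* Let $X=(X_1,\dots,X_d)$ be a random vector with values in $\{0,1\}^d$ such that $\mathbb{P}(X=x)>0$ for every $x\in\{0,1\}^d$. Let $V_\emptyset$ be the space of almost surely constant real random variables and, for nonempty $A\subseteq D:=\{1,\dots,d\}$, $V_A:=\left(\sum_{B\subsetneq A}V_B\right)^{\perp_A}$, the orthogonal complement taken inside $\mathbb{L}^2_A$. For $A\subseteq D$ let $e_A(X_A):=\dfrac{(-1)^{\sum_{j\in A}X_j}}{\mathbf{P}_A(X_A)}$, with $e_\emptyset(X_\emptyset)=1$. Then $V_A=\mathrm{span}(e_A(X_A))$ for every $A\subseteq D$; in particular $\{e_A(X_A)\}_{A\subseteq D}$ is a basis of the space of real-valued functions of $X$ which is hierarchically orthogonal (i.e. $\mathbb{E}[e_A(X_A)e_B(X_B)]=0$ whenever $B\subsetneq A$).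
   Context: For $A\subseteq D$, $X_A:=(X_i)_{i\in A}$, $\mathbf{P}_A(x_A):=\mathbb{P}(X_A=x_A)$, and $\mathbb{L}^2_A:=\{f(X_A): f:\{0,1\}^{|A|}\to\mathbb{R}\}$, a Hilbert space for the inner product $\langle U,V\rangle:=\mathbb{E}[UV]$; $F^{\perp_A}$ denotes the orthogonal complement of a subspace $F$ in $\mathbb{L}^2_A$. *)

theory Defs
  imports "HOL-Probability.Probability"
begin

text \<open>A point x of {0,1}^d is encoded as the set of coordinates j in D = {1..d}
  with x_j = 1, so the sample space is Pow D and the law of X is a pmf on nat set.
  A real random variable f(X) is encoded by its (canonical) function on Pow D,
  extended by 0 outside Pow D.\<close>

definition RV :: "nat set \<Rightarrow> (nat set \<Rightarrow> real) set" where
  "RV D = {f. \<forall>x. x \<notin> Pow D \<longrightarrow> f x = 0}"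

text \<open>L2_A: random variables of the form g(X_A), X_A being encoded by x \<inter> A.\<close>
definition L2 :: "nat set \<Rightarrow> nat set \<Rightarrow> (nat set \<Rightarrow> real) set" where
  "L2 D A = {f \<in> RV D. \<exists>g. \<forall>x\<in>Pow D. f x = g (x \<inter> A)}"

definition ip :: "nat set pmf \<Rightarrow> (nat set \<Rightarrow> real) \<Rightarrow> (nat set \<Rightarrow> real) \<Rightarrow> real" where
  "ip p f g = measure_pmf.expectation p (\<lambda>x. f x * g x)"

definition orth :: "nat set pmf \<Rightarrow> nat set \<Rightarrow> nat set \<Rightarrow> (nat set \<Rightarrow> real) set
    \<Rightarrow> (nat set \<Rightarrow> real) set" where
  "orth p D A S = {f \<in> L2 D A. \<forall>g\<in>S. ip p f g = 0}"

definition subsum :: "(nat set \<Rightarrow> (nat set \<Rightarrow> real) set) \<Rightarrow> nat set \<Rightarrow> (nat set \<Rightarrow> real) set" where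
  "subsum V A = {h. \<exists>f. (\<forall>B. B \<subset> A \<longrightarrow> f B \<in> V B) \<and> h = (\<lambda>x. \<Sum>B\<in>{B. B \<subset> A}. f B x)}"

definition Vsp :: "nat set pmf \<Rightarrow> nat set \<Rightarrow> nat set \<Rightarrow> (nat set \<Rightarrow> real) set" where
  "Vsp p D = wfrec finite_psubset
     (\<lambda>V A. if A = {} then L2 D {} else orth p D A (subsum V A))"

definition PA :: "nat set pmf \<Rightarrow> nat set \<Rightarrow> nat set \<Rightarrow> real" where
  "PA p A a = measure_pmf.prob p {x. x \<inter> A = a}"

definition eA :: "nat set pmf \<Rightarrow> nat set \<Rightarrow> nat set \<Rightarrow> nat set \<Rightarrow> real" where
  "eA p D A x = (if x \<subseteq> D then (-1) ^ card (x \<inter> A) / PA p A (x \<inter> A) else 0)"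

end

theory Submission
  imports Defs "HOL-Library.Function_Algebras"
begin

locale setting =
  fixes p :: "nat set pmf" and D :: "nat set"
  assumes finD: "finite D" and supp: "set_pmf p = Pow D"
begin

lemma pmf_pos: "x \<subseteq> D \<Longrightarrow> 0 < pmf p x"
  by (rule pmf_positive) (simp add: supp)

lemma ip_sum: "ip p f g = (\<Sum>x\<in>Pow D. pmf p x * (f x * g x))"
  unfolding ip_def
  by (subst integral_measure_pmf[where A="Pow D"]) (use finD supp in auto)

lemma PA_sum: "PA p A a = (\<Sum>x\<in>{x\<in>Pow D. x \<inter> A = a}. pmf p x)"
proof -
  have "PA p A a = measure_pmf.prob p ({x. x \<inter> A = a} \<inter> set_pmf p)"
    unfolding PA_def by (simp add: measure_Int_set_pmf)
  also have "\<dots> = (\<Sum>x\<in>{x\<in>Pow D. x \<inter> A = a}. pmf p x)"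
    by (subst measure_measure_pmf_finite) (use finD supp in \<open>auto intro!: sum.cong\<close>)
  finally show ?thesis .
qed

lemma PA_pos: "a \<subseteq> A \<Longrightarrow> A \<subseteq> D \<Longrightarrow> 0 < PA p A a"
  unfolding PA_sum
  by (rule sum_pos2[where i=a]) (use finD pmf_pos in auto)

lemma marginal:
  assumes "A \<subseteq> D"
  shows "(\<Sum>x\<in>Pow D. pmf p x * h (x \<inter> A)) = (\<Sum>a\<in>Pow A. PA p A a * h a)"
proof -
  have "(\<Sum>x\<in>Pow D. pmf p x * h (x \<inter> A)) =
     (\<Sum>a\<in>Pow A. \<Sum>x\<in>{x\<in>Pow D. x \<inter> A = a}. pmf p x * h (x \<inter> A))"
    by (rule sum.group[symmetric]) (use finD assms in \<open>auto intro: finite_subset\<close>)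
  also have "\<dots> = (\<Sum>a\<in>Pow A. \<Sum>x\<in>{x\<in>Pow D. x \<inter> A = a}. pmf p x * h a)"
    by (intro sum.cong) auto
  also have "\<dots> = (\<Sum>a\<in>Pow A. PA p A a * h a)"
    by (simp add: PA_sum sum_distrib_right)
  finally show ?thesis .
qed

end

lemma sum_Pow_insert:
  assumes "finite B" "j \<notin> B"
  shows "(\<Sum>a\<in>Pow (insert j B). G a) = (\<Sum>a\<in>Pow B. G a + G (insert j a))"
proof -
  have inj: "inj_on (insert j) (Pow B)"
    using assms(2) by (auto simp: inj_on_def)
  have "(\<Sum>a\<in>Pow (insert j B). G a) = (\<Sum>a\<in>Pow B. G a) + (\<Sum>a\<in>insert j ` Pow B. G a)"
    unfolding Pow_insert
    by (rule sum.union_disjoint) (use assms in auto)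
  also have "(\<Sum>a\<in>insert j ` Pow B. G a) = (\<Sum>a\<in>Pow B. G (insert j a))"
    by (rule sum.reindex_cong[OF inj refl refl])
  finally show ?thesis by (simp add: sum.distrib)
qed

lemma alt_zero:
  assumes "finite A" "j \<in> A" "j \<notin> B"
  shows "(\<Sum>a\<in>Pow A. (-1::real) ^ card a * h (a \<inter> B)) = 0"
proof -
  have fA: "finite (A - {j})" using assms by auto
  have A: "A = insert j (A - {j})" using assms by auto
  have "(\<Sum>a\<in>Pow A. (-1::real) ^ card a * h (a \<inter> B)) =
     (\<Sum>a\<in>Pow (A - {j}). (-1::real) ^ card a * h (a \<inter> B) + (-1) ^ card (insert j a) * h (insert j a \<inter> B))"
    by (subst A, subst sum_Pow_insert) (use fA in auto)
  also have "\<dots> = 0"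
  proof (rule sum.neutral, rule ballI)
    fix a assume a: "a \<in> Pow (A - {j})"
    then have "finite a" "j \<notin> a" using fA by (auto intro: finite_subset)
    then have "card (insert j a) = Suc (card a)" by simp
    moreover have "insert j a \<inter> B = a \<inter> B" using assms by auto
    ultimately show "(-1::real) ^ card a * h (a \<inter> B) + (-1) ^ card (insert j a) * h (insert j a \<inter> B) = 0"
      by simp
  qed
  finally show ?thesis .
qed

lemma walsh:
  assumes "finite B"
  shows "(\<Sum>b\<in>Pow B. (-1::real) ^ card b * k b) = 0 \<Longrightarrow> \<exists>K. \<forall>b\<subseteq>B. k b = (\<Sum>j\<in>B. K j (b - {j}))"
  using assms
proof (induction B arbitrary: k rule: finite_induct)
  case empty
  then show ?case by auto
next
  case (insert j B)
  define k' where "k' a = k (insert j a) - k a" for a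
  have "0 = (\<Sum>b\<in>Pow (insert j B). (-1::real) ^ card b * k b)" using insert by simp
  also have "\<dots> = (\<Sum>a\<in>Pow B. (-1::real) ^ card a * k a + (-1) ^ card (insert j a) * k (insert j a))"
    by (rule sum_Pow_insert) (use insert in auto)
  also have "\<dots> = (\<Sum>a\<in>Pow B. - ((-1::real) ^ card a * k' a))"
  proof (rule sum.cong[OF refl])
    fix a assume a: "a \<in> Pow B"
    then have "finite a" "j \<notin> a" using insert by (auto intro: finite_subset)
    then have "card (insert j a) = Suc (card a)" by simp
    then show "(-1::real) ^ card a * k a + (-1) ^ card (insert j a) * k (insert j a) = - ((-1::real) ^ card a * k' a)"
      by (simp add: k'_def algebra_simps)
  qed
  finally have "(\<Sum>a\<in>Pow B. (-1::real) ^ card a * k' a) = 0"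
    by (simp add: sum_negf)
  from insert.IH[OF this] obtain K' where K': "\<And>b. b \<subseteq> B \<Longrightarrow> k' b = (\<Sum>i\<in>B. K' i (b - {i}))" by blast
  define K where "K i s = (if i = j then k s else if j \<in> s then K' i (s - {j}) else 0)" for i s
  have "k b = (\<Sum>i\<in>insert j B. K i (b - {i}))" if b: "b \<subseteq> insert j B" for b
  proof -
    have "(\<Sum>i\<in>insert j B. K i (b - {i})) = k (b - {j}) + (\<Sum>i\<in>B. K i (b - {i}))"
      using insert by (simp add: K_def)
    also have "(\<Sum>i\<in>B. K i (b - {i})) = (\<Sum>i\<in>B. if j \<in> b then K' i (b - {j} - {i}) else 0)"
      using insert by (intro sum.cong) (auto simp: K_def Diff_insert2[symmetric] insert_commute)
    also have "\<dots> = (if j \<in> b then k' (b - {j}) else 0)"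
    proof -
      have "b - {j} \<subseteq> B" using b by auto
      then show ?thesis using K'[of "b - {j}"] by auto
    qed
    also have "k (b - {j}) + \<dots> = k b"
      using b by (auto simp: k'_def insert_absorb)
    finally show ?thesis by simp
  qed
  then show ?case by (intro exI[of _ K]) blast
qed

context setting begin

lemma eA_in: "x \<subseteq> D \<Longrightarrow> eA p D A x = (-1) ^ card (x \<inter> A) / PA p A (x \<inter> A)"
  by (simp add: eA_def)

lemma eA_out: "\<not> x \<subseteq> D \<Longrightarrow> eA p D A x = 0"
  by (simp add: eA_def)

lemma orth_L2:
  assumes "B \<subset> A" "A \<subseteq> D"
  shows "(\<Sum>x\<in>Pow D. pmf p x * (eA p D A x * h (x \<inter> B))) = 0"
proof -
  define F where "F a = (-1) ^ card a / PA p A a * h (a \<inter> B)" for a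
  have "(\<Sum>x\<in>Pow D. pmf p x * (eA p D A x * h (x \<inter> B))) = (\<Sum>x\<in>Pow D. pmf p x * F (x \<inter> A))"
  proof (rule sum.cong[OF refl])
    fix x assume "x \<in> Pow D"
    moreover have "x \<inter> A \<inter> B = x \<inter> B" using assms by auto
    ultimately show "pmf p x * (eA p D A x * h (x \<inter> B)) = pmf p x * F (x \<inter> A)"
      by (simp add: eA_in F_def)
  qed
  also have "\<dots> = (\<Sum>a\<in>Pow A. PA p A a * F a)" by (rule marginal[OF assms(2)])
  also have "\<dots> = (\<Sum>a\<in>Pow A. (-1) ^ card a * h (a \<inter> B))"
  proof (rule sum.cong[OF refl])
    fix a assume "a \<in> Pow A"
    then have "PA p A a > 0" using PA_pos assms by auto
    then show "PA p A a * F a = (-1) ^ card a * h (a \<inter> B)" by (simp add: F_def)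
  qed
  also have "\<dots> = 0"
  proof -
    obtain j where j: "j \<in> A" "j \<notin> B" using assms by auto
    have fA: "finite A" by (meson finite_subset assms(2) finD)
    show ?thesis by (rule alt_zero[OF fA j])
  qed
  finally show ?thesis .
qed

lemma orth_e:
  assumes "B \<subset> A" "A \<subseteq> D"
  shows "(\<Sum>x\<in>Pow D. pmf p x * (eA p D A x * eA p D B x)) = 0"
proof -
  have "(\<Sum>x\<in>Pow D. pmf p x * (eA p D A x * eA p D B x)) =
    (\<Sum>x\<in>Pow D. pmf p x * (eA p D A x * (\<lambda>b. (-1) ^ card b / PA p B b) (x \<inter> B)))"
    by (intro sum.cong) (auto simp: eA_in)
  also have "\<dots> = 0" by (rule orth_L2[OF assms])
  finally show ?thesis .
qed

definition SP :: "nat set \<Rightarrow> (nat set \<Rightarrow> real) set" where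
  "SP B = {f. \<exists>c. \<forall>x\<subseteq>D. f x = (\<Sum>C\<in>Pow B. c C * eA p D C x)}"

lemma SPI: "(\<And>x. x \<subseteq> D \<Longrightarrow> f x = (\<Sum>C\<in>Pow B. c C * eA p D C x)) \<Longrightarrow> f \<in> SP B"
  unfolding SP_def mem_Collect_eq by (rule exI[of _ c]) blast

lemma SPD: "f \<in> SP B \<Longrightarrow> \<exists>c. \<forall>x. x \<subseteq> D \<longrightarrow> f x = (\<Sum>C\<in>Pow B. c C * eA p D C x)"
  unfolding SP_def by simp

lemma SP_add: "f \<in> SP B \<Longrightarrow> g \<in> SP B \<Longrightarrow> (\<lambda>x. f x + g x) \<in> SP B"
proof -
  assume "f \<in> SP B" "g \<in> SP B"
  from SPD[OF this(1)] obtain c1 where c1: "\<forall>x. x \<subseteq> D \<longrightarrow> f x = (\<Sum>C\<in>Pow B. c1 C * eA p D C x)" ..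
  from SPD[OF \<open>g \<in> SP B\<close>] obtain c2 where c2: "\<forall>x. x \<subseteq> D \<longrightarrow> g x = (\<Sum>C\<in>Pow B. c2 C * eA p D C x)" ..
  show ?thesis
  proof (rule SPI[where c="\<lambda>C. c1 C + c2 C"])
    fix x :: "nat set" assume "x \<subseteq> D"
    then show "f x + g x = (\<Sum>C\<in>Pow B. (c1 C + c2 C) * eA p D C x)"
      using c1 c2 by (simp add: sum.distrib distrib_right)
  qed
qed

lemma SP_zero: "(\<lambda>x. 0) \<in> SP B"
  by (rule SPI[where c="\<lambda>_. 0"]) simp

lemma SP_sum: "finite J \<Longrightarrow> (\<And>j. j \<in> J \<Longrightarrow> F j \<in> SP B) \<Longrightarrow> (\<lambda>x. \<Sum>j\<in>J. F j x) \<in> SP B"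
proof (induction J rule: finite_induct)
  case empty
  then show ?case using SP_zero by simp
next
  case (insert a J)
  then have "(\<lambda>x. F a x + (\<Sum>j\<in>J. F j x)) \<in> SP B"
    by (intro SP_add) auto
  then show ?case using insert by simp
qed

lemma SP_e: assumes "finite B" shows "(\<lambda>x. k * eA p D B x) \<in> SP B"
proof (rule SPI[where c="\<lambda>C. if C = B then k else 0"])
  fix x :: "nat set"
  have "(\<Sum>C\<in>Pow B. (if C = B then k else 0) * eA p D C x) = (\<Sum>C\<in>Pow B. if C = B then k * eA p D C x else 0)"
    by (intro sum.cong) auto
  also have "\<dots> = k * eA p D B x" using assms by (subst sum.delta) auto
  finally show "k * eA p D B x = (\<Sum>C\<in>Pow B. (if C = B then k else 0) * eA p D C x)" by simp
qed

lemma SP_mono: assumes "B' \<subseteq> B" "finite B" "f \<in> SP B'" shows "f \<in> SP B"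
proof -
  from SPD[OF assms(3)] obtain c where c: "\<forall>x. x \<subseteq> D \<longrightarrow> f x = (\<Sum>C\<in>Pow B'. c C * eA p D C x)" ..
  define c' where "c' C = (if C \<subseteq> B' then c C else 0)" for C
  show ?thesis
  proof (rule SPI[where c=c'])
    fix x :: "nat set" assume "x \<subseteq> D"
    have "(\<Sum>C\<in>Pow B. c' C * eA p D C x) = (\<Sum>C\<in>Pow B'. c' C * eA p D C x)"
      by (rule sum.mono_neutral_right) (use assms in \<open>auto simp: c'_def\<close>)
    also have "\<dots> = (\<Sum>C\<in>Pow B'. c C * eA p D C x)" by (simp add: c'_def)
    finally show "f x = (\<Sum>C\<in>Pow B. c' C * eA p D C x)" using c \<open>x \<subseteq> D\<close> by simp
  qed
qed

lemma spanning: "B \<subseteq> D \<Longrightarrow> (\<lambda>x. g (x \<inter> B)) \<in> SP B"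
proof (induction B arbitrary: g rule: measure_induct_rule[of card])
  case (less B)
  have fB: "finite B" by (meson finite_subset less.prems finD)
  define den where "den = (\<Sum>b\<in>Pow B. 1 / PA p B b)"
  have den: "den > 0" unfolding den_def
  proof (rule sum_pos2[where i="{}"])
    show "finite (Pow B)" using fB by simp
    show "{} \<in> Pow B" by simp
    show "0 < 1 / PA p B {}" using PA_pos[of "{}" B] less.prems by simp
    fix i assume "i \<in> Pow B"
    then have "0 < PA p B i" using PA_pos less.prems by blast
    then show "0 \<le> 1 / PA p B i" by simp
  qed
  define \<kappa> where "\<kappa> = (\<Sum>b\<in>Pow B. (-1) ^ card b * g b) / den"
  define k where "k b = g b - \<kappa> * (-1) ^ card b / PA p B b" for b
  have "(\<Sum>b\<in>Pow B. (-1::real) ^ card b * k b) = (\<Sum>b\<in>Pow B. (-1) ^ card b * g b) - \<kappa> * den"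
  proof -
    have "(\<Sum>b\<in>Pow B. (-1::real) ^ card b * k b) = (\<Sum>b\<in>Pow B. (-1) ^ card b * g b - \<kappa> * (1 / PA p B b))"
    proof (rule sum.cong[OF refl])
      fix b :: "nat set"
      have "(-1::real) ^ card b * (-1) ^ card b = 1"
        by (simp add: power_mult_distrib[symmetric])
      then show "(-1::real) ^ card b * k b = (-1) ^ card b * g b - \<kappa> * (1 / PA p B b)"
        unfolding k_def by (simp add: right_diff_distrib)
    qed
    also have "\<dots> = (\<Sum>b\<in>Pow B. (-1) ^ card b * g b) - \<kappa> * den"
      by (simp only: sum_subtractf sum_distrib_left den_def)
    finally show ?thesis .
  qed
  also have "\<dots> = 0" using den by (simp add: \<kappa>_def)
  finally have alt0: "(\<Sum>b\<in>Pow B. (-1::real) ^ card b * k b) = 0" .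
  from walsh[OF fB alt0] obtain K where K0: "\<forall>b\<subseteq>B. k b = (\<Sum>j\<in>B. K j (b - {j}))" ..
  have K: "\<And>b. b \<subseteq> B \<Longrightarrow> k b = (\<Sum>j\<in>B. K j (b - {j}))" using K0 by simp
  have eq: "g (x \<inter> B) = \<kappa> * eA p D B x + (\<Sum>j\<in>B. K j (x \<inter> (B - {j})))" if "x \<subseteq> D" for x
  proof -
    have "g (x \<inter> B) = k (x \<inter> B) + \<kappa> * eA p D B x" using that by (simp add: k_def eA_in)
    also have "k (x \<inter> B) = (\<Sum>j\<in>B. K j (x \<inter> (B - {j})))" using K[of "x \<inter> B"] by (simp add: Int_Diff)
    finally show ?thesis by simp
  qed
  have "(\<lambda>x. \<kappa> * eA p D B x + (\<Sum>j\<in>B. K j (x \<inter> (B - {j})))) \<in> SP B"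
  proof (rule SP_add[OF SP_e[OF fB]], rule SP_sum[OF fB])
    fix j assume j: "j \<in> B"
    then have "card (B - {j}) < card B" using fB by (meson card_Diff1_less)
    moreover have "B - {j} \<subseteq> D" using less.prems by auto
    ultimately have "(\<lambda>x. K j (x \<inter> (B - {j}))) \<in> SP (B - {j})" by (rule less.IH)
    then show "(\<lambda>x. K j (x \<inter> (B - {j}))) \<in> SP B" by (rule SP_mono[rotated 2]) (use fB in auto)
  qed
  from SPD[OF this] obtain c where c: "\<forall>x. x \<subseteq> D \<longrightarrow> \<kappa> * eA p D B x + (\<Sum>j\<in>B. K j (x \<inter> (B - {j}))) = (\<Sum>C\<in>Pow B. c C * eA p D C x)" ..
  show ?case
  proof (rule SPI[where c=c])
    fix x :: "nat set" assume x: "x \<subseteq> D"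
    show "g (x \<inter> B) = (\<Sum>C\<in>Pow B. c C * eA p D C x)" using eq[OF x] c x by simp
  qed
qed

end

lemma subsum_cong:
  assumes "\<And>B. B \<subset> A \<Longrightarrow> V' B = V B"
  shows "subsum V' A = subsum V A"
proof -
  have "(\<forall>B. B \<subset> A \<longrightarrow> f B \<in> V' B) \<longleftrightarrow> (\<forall>B. B \<subset> A \<longrightarrow> f B \<in> V B)" for f
    using assms by auto
  then show ?thesis unfolding subsum_def by simp
qed

lemma Vsp_eq:
  assumes "finite A"
  shows "Vsp p D A = (if A = {} then L2 D {} else orth p D A (subsum (Vsp p D) A))"
proof -
  let ?F = "\<lambda>V A. if A = {} then L2 D {} else orth p D A (subsum V A)"
  have c: "cut (wfrec finite_psubset ?F) finite_psubset A B = wfrec finite_psubset ?F B" if "B \<subset> A" for B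
    using that assms by (simp add: cut_apply finite_psubset_def)
  have "subsum (cut (wfrec finite_psubset ?F) finite_psubset A) A = subsum (wfrec finite_psubset ?F) A"
    by (rule subsum_cong) (rule c)
  then show ?thesis
    unfolding Vsp_def by (subst wfrec[OF wf_finite_psubset]) simp
qed

lemma fsum_apply: "(\<Sum>C\<in>S. F C) (x::'a) = (\<Sum>C\<in>S. F C x)"
  by (induction S rule: infinite_finite_induct) auto

interpretation fv: vector_space "\<lambda>(r::real) (f::nat set \<Rightarrow> real) x. r * f x"
  by unfold_locales (auto simp: fun_eq_iff algebra_simps)

context setting begin

lemma part3: "B \<subset> A \<Longrightarrow> A \<subseteq> D \<Longrightarrow> ip p (eA p D A) (eA p D B) = 0"
  by (simp add: ip_sum orth_e)

lemma PA_empty: "PA p {} {} = 1"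
  by (simp add: PA_def)

lemma V_char: "A \<subseteq> D \<Longrightarrow> Vsp p D A = {(\<lambda>x. c * eA p D A x) | c. True}"
proof (induction A rule: measure_induct_rule[of card])
  case (less A)
  have fA: "finite A" by (meson finite_subset less.prems finD)
  show ?case
  proof (cases "A = {}")
    case True
    have e0: "eA p D {} x = (if x \<subseteq> D then 1 else 0)" for x
      by (simp add: eA_def PA_empty)
    show ?thesis
    proof (intro equalityI subsetI)
      fix f assume "f \<in> Vsp p D A"
      then have "f \<in> L2 D {}" using True Vsp_eq fA by simp
      then obtain g :: "nat set \<Rightarrow> real" where g: "\<forall>x\<in>Pow D. f x = g {}" and rv: "f \<in> RV D" unfolding L2_def by auto
      have "f = (\<lambda>x. g {} * eA p D A x)"
        using g rv True unfolding RV_def by (auto simp: e0 fun_eq_iff)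
      then show "f \<in> {(\<lambda>x. c * eA p D A x) | c. True}" by blast
    next
      fix f assume "f \<in> {(\<lambda>x. c * eA p D A x) | c. True}"
      then obtain c where f: "f = (\<lambda>x. c * eA p D A x)" by blast
      have "f \<in> L2 D {}" unfolding L2_def RV_def f using True
        by (auto simp: e0 intro!: exI[of _ "\<lambda>_. c"])
      then show "f \<in> Vsp p D A" using True Vsp_eq fA by simp
    qed
  next
    case False
    have IH: "Vsp p D B = {(\<lambda>x. c * eA p D B x) | c. True}" if "B \<subset> A" for B
      using less.IH[of B] that less.prems psubset_card_mono[OF fA that] by auto
    have VA: "Vsp p D A = orth p D A (subsum (Vsp p D) A)" using False Vsp_eq fA by simp
    show ?thesis
    proof (intro equalityI subsetI)
      fix f assume "f \<in> Vsp p D A"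
      then have fo: "f \<in> orth p D A (subsum (Vsp p D) A)" using VA by simp
      then obtain g where g: "\<forall>x\<in>Pow D. f x = g (x \<inter> A)" and rv: "f \<in> RV D"
        unfolding orth_def L2_def by auto
      have ort: "\<forall>h\<in>subsum (Vsp p D) A. ip p f h = 0" using fo unfolding orth_def by auto
      define u where "u a = PA p A a * g a" for a
      have flip: "u (insert j b) = - u b" if j: "j \<in> A" and b: "b \<subseteq> A - {j}" for j b
      proof -
        define Bj where "Bj = A - {j}"
        define H where "H s = (if s = b then 1 else 0 :: real)" for s
        have BjD: "Bj \<subseteq> D" using less.prems by (auto simp: Bj_def)
        obtain c where c: "\<forall>x\<subseteq>D. H (x \<inter> Bj) = (\<Sum>C\<in>Pow Bj. c C * eA p D C x)"
          using spanning[OF BjD, of H] unfolding SP_def by blast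
        define F where "F C = (\<lambda>x. (if C \<subseteq> Bj then c C else 0) * eA p D C x)" for C
        define h where "h = (\<lambda>x. \<Sum>C\<in>{C. C \<subset> A}. F C x)"
        have "h \<in> subsum (Vsp p D) A"
          unfolding subsum_def h_def
          by (rule CollectI, rule exI[of _ F]) (auto simp: IH F_def)
        then have ip0: "ip p f h = 0" using ort by blast
        have finA': "finite {C. C \<subset> A}" by (rule finite_subset[of _ "Pow A"]) (use fA in auto)
        have hx: "h x = H (x \<inter> Bj)" if "x \<subseteq> D" for x
        proof -
          have "h x = (\<Sum>C\<in>Pow Bj. F C x)"
            unfolding h_def
            by (rule sum.mono_neutral_right[OF finA']) (use j in \<open>auto simp: Bj_def F_def\<close>)
          also have "\<dots> = (\<Sum>C\<in>Pow Bj. c C * eA p D C x)" by (simp add: F_def)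
          finally show ?thesis using c that by simp
        qed
        have A_ins: "A = insert j Bj" "j \<notin> Bj" using j by (auto simp: Bj_def)
        have fBj: "finite Bj" using fA by (simp add: Bj_def)
        have "0 = (\<Sum>x\<in>Pow D. pmf p x * (f x * h x))" using ip0 by (simp add: ip_sum)
        also have "\<dots> = (\<Sum>x\<in>Pow D. pmf p x * (\<lambda>a. g a * H (a \<inter> Bj)) (x \<inter> A))"
        proof (rule sum.cong[OF refl])
          fix x assume x: "x \<in> Pow D"
          have "x \<inter> A \<inter> Bj = x \<inter> Bj" by (auto simp: Bj_def)
          then show "pmf p x * (f x * h x) = pmf p x * (\<lambda>a. g a * H (a \<inter> Bj)) (x \<inter> A)"
            using x g hx by simp
        qed
        also have "\<dots> = (\<Sum>a\<in>Pow A. PA p A a * (g a * H (a \<inter> Bj)))"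
          by (rule marginal[OF less.prems, of "\<lambda>a. g a * H (a \<inter> Bj)"])
        also have "\<dots> = (\<Sum>a\<in>Pow Bj. u a * H (a \<inter> Bj) + u (insert j a) * H (insert j a \<inter> Bj))"
          unfolding u_def by (subst A_ins(1), subst sum_Pow_insert[OF fBj A_ins(2)]) (simp add: A_ins(1)[symmetric] mult.assoc)
        also have "\<dots> = (\<Sum>a\<in>Pow Bj. if a = b then u a + u (insert j a) else 0)"
        proof (rule sum.cong[OF refl])
          fix a assume "a \<in> Pow Bj"
          then have "a \<inter> Bj = a" "insert j a \<inter> Bj = a" using A_ins by auto
          then show "u a * H (a \<inter> Bj) + u (insert j a) * H (insert j a \<inter> Bj) = (if a = b then u a + u (insert j a) else 0)"
            by (simp add: H_def)
        qed
        also have "\<dots> = u b + u (insert j b)"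
          using fBj b by (subst sum.delta) (auto simp: Bj_def)
        finally show ?thesis by simp
      qed
      have ualt0: "finite a \<Longrightarrow> a \<subseteq> A \<Longrightarrow> u a = (-1) ^ card a * u {}" for a
      proof (induction a rule: finite_induct)
        case empty then show ?case by simp
      next
        case (insert j a)
        then have "u (insert j a) = - u a" using flip[of j a] by auto
        then show ?case using insert by simp
      qed
      have ualt: "a \<subseteq> A \<Longrightarrow> u a = (-1) ^ card a * u {}" for a
        using ualt0[of a] fA by (meson finite_subset)
      have "f = (\<lambda>x. u {} * eA p D A x)"
      proof
        fix x
        show "f x = u {} * eA p D A x"
        proof (cases "x \<subseteq> D")
          case True
          have pos: "PA p A (x \<inter> A) > 0" using PA_pos less.prems by auto
          have "f x = u (x \<inter> A) / PA p A (x \<inter> A)" using g True pos by (simp add: u_def)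
          also have "\<dots> = u {} * eA p D A x" using ualt[of "x \<inter> A"] True by (simp add: eA_in)
          finally show ?thesis .
        next
          case False
          then show ?thesis using rv by (simp add: RV_def eA_out)
        qed
      qed
      then show "f \<in> {(\<lambda>x. c * eA p D A x) | c. True}" by blast
    next
      fix f assume "f \<in> {(\<lambda>x. c * eA p D A x) | c. True}"
      then obtain c where f: "f = (\<lambda>x. c * eA p D A x)" by blast
      have L: "f \<in> L2 D A" unfolding L2_def RV_def f
        by (auto simp: eA_out eA_in intro!: exI[of _ "\<lambda>a. c * (-1) ^ card a / PA p A a"])
      have O: "ip p f h = 0" if h: "h \<in> subsum (Vsp p D) A" for h
      proof -
        obtain F where F: "\<And>B. B \<subset> A \<Longrightarrow> F B \<in> Vsp p D B" and hF: "h = (\<lambda>x. \<Sum>B\<in>{B. B \<subset> A}. F B x)"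
          using h unfolding subsum_def by blast
        have z: "(\<Sum>x\<in>Pow D. pmf p x * (f x * F B x)) = 0" if B: "B \<subset> A" for B
        proof -
          obtain cB where cB: "F B = (\<lambda>x. cB * eA p D B x)" using F[OF B] IH[OF B] by blast
          have "(\<Sum>x\<in>Pow D. pmf p x * (f x * F B x)) = (c * cB) * (\<Sum>x\<in>Pow D. pmf p x * (eA p D A x * eA p D B x))"
            by (simp add: f cB sum_distrib_left algebra_simps)
          also have "\<dots> = 0" using orth_e[OF B less.prems] by simp
          finally show ?thesis .
        qed
        have "ip p f h = (\<Sum>x\<in>Pow D. \<Sum>B\<in>{B. B \<subset> A}. pmf p x * (f x * F B x))"
          by (simp add: ip_sum hF sum_distrib_left)
        also have "\<dots> = (\<Sum>B\<in>{B. B \<subset> A}. \<Sum>x\<in>Pow D. pmf p x * (f x * F B x))"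
          by (rule sum.swap)
        also have "\<dots> = 0" using z by simp
        finally show ?thesis .
      qed
      have "f \<in> orth p D A (subsum (Vsp p D) A)" unfolding orth_def using L O by blast
      then show "f \<in> Vsp p D A" using VA by simp
    qed
  qed
qed

end

context setting begin

lemma indep:
  assumes c0: "\<And>x. x \<subseteq> D \<Longrightarrow> (\<Sum>A\<in>Pow D. c A * eA p D A x) = 0"
  and AD: "A \<subseteq> D"
  shows "c A = 0"
proof -
  let ?sc = "\<lambda>(r::real) (f::nat set \<Rightarrow> real) x. r * f x"
  define E where "E = eA p D ` Pow D"
  define dl where "dl y = (\<lambda>x. if x = y then 1 else 0 :: real)" for y :: "nat set"
  define Dl where "Dl = dl ` Pow D"
  have fPD: "finite (Pow D)" using finD by simp
  have fE: "finite E" unfolding E_def using fPD by simp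
  have e_sum: "(\<lambda>x. \<Sum>C\<in>Pow D. cc C * eA p D C x) = (\<Sum>C\<in>Pow D. ?sc (cc C) (eA p D C))" for cc
    by (rule ext) (simp add: fsum_apply)
  have Dl_span: "Dl \<subseteq> fv.span E"
  proof
    fix v assume "v \<in> Dl"
    then obtain y where y: "y \<subseteq> D" "v = dl y" unfolding Dl_def by auto
    from SPD[OF spanning[OF subset_refl, of "dl y"]] obtain cc where
      cc: "\<forall>x. x \<subseteq> D \<longrightarrow> dl y (x \<inter> D) = (\<Sum>C\<in>Pow D. cc C * eA p D C x)" ..
    have "v = (\<lambda>x. \<Sum>C\<in>Pow D. cc C * eA p D C x)"
    proof
      fix x show "v x = (\<Sum>C\<in>Pow D. cc C * eA p D C x)"
      proof (cases "x \<subseteq> D")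
        case True
        then show ?thesis using cc y by (simp add: Int_absorb2)
      next
        case False
        then show ?thesis using y by (auto simp: dl_def eA_out)
      qed
    qed
    also have "\<dots> = (\<Sum>C\<in>Pow D. ?sc (cc C) (eA p D C))" by (rule e_sum)
    also have "\<dots> \<in> fv.span E"
      by (intro fv.span_sum fv.span_scale fv.span_base) (auto simp: E_def)
    finally show "v \<in> fv.span E" .
  qed
  have Dl_ind: "fv.independent Dl"
    unfolding fv.dependent_def
  proof
    assume "\<exists>a\<in>Dl. a \<in> fv.span (Dl - {a})"
    then obtain y where y: "y \<subseteq> D" "dl y \<in> fv.span (Dl - {dl y})" unfolding Dl_def by auto
    have "fv.subspace {f. f y = 0}"
      by (rule fv.subspaceI) auto
    moreover have "Dl - {dl y} \<subseteq> {f. f y = 0}"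
      by (auto simp: Dl_def dl_def)
    ultimately have "fv.span (Dl - {dl y}) \<subseteq> {f. f y = 0}"
      by (intro fv.span_minimal)
    with y have "dl y y = 0" by auto
    then show False by (simp add: dl_def)
  qed
  have inj_dl: "inj_on dl (Pow D)"
  proof (rule inj_onI)
    fix y z assume "dl y = dl z"
    then have "dl y y = dl z y" by simp
    then show "y = z" by (simp add: dl_def split: if_splits)
  qed
  have cDl: "card Dl = card (Pow D)" unfolding Dl_def by (rule card_image[OF inj_dl])
  have "card Dl \<le> card E" using fv.independent_span_bound[OF fE Dl_ind Dl_span] by simp
  moreover have "card E \<le> card (Pow D)" unfolding E_def by (rule card_image_le[OF fPD])
  ultimately have cE: "card E = card (Pow D)" using cDl by simp
  have inj_e: "inj_on (eA p D) (Pow D)"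
    by (rule eq_card_imp_inj_on[OF fPD]) (use cE in \<open>simp add: E_def\<close>)
  have E_ind: "fv.independent E"
    unfolding fv.dependent_def
  proof
    assume "\<exists>a\<in>E. a \<in> fv.span (E - {a})"
    then obtain a where a: "a \<in> E" "a \<in> fv.span (E - {a})" by blast
    have "E \<subseteq> fv.span (E - {a})"
    proof
      fix v assume "v \<in> E"
      then show "v \<in> fv.span (E - {a})"
        using a by (cases "v = a") (auto intro: fv.span_base)
    qed
    then have "fv.span E \<subseteq> fv.span (E - {a})"
      by (intro fv.span_minimal) auto
    with Dl_span have "Dl \<subseteq> fv.span (E - {a})" by blast
    moreover have "finite (E - {a})" using fE by simp
    ultimately have "card Dl \<le> card (E - {a})"
      using fv.independent_span_bound[OF _ Dl_ind] by simp
    moreover have "card (E - {a}) < card E" using a fE by (intro card_Diff1_less)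
    ultimately show False using cDl cE by simp
  qed
  define u where "u v = c (the_inv_into (Pow D) (eA p D) v)" for v
  have "(\<Sum>v\<in>E. ?sc (u v) v) = (\<Sum>C\<in>Pow D. ?sc (u (eA p D C)) (eA p D C))"
    unfolding E_def by (rule sum.reindex_cong[OF inj_e refl refl])
  also have "\<dots> = (\<Sum>C\<in>Pow D. ?sc (c C) (eA p D C))"
    by (intro sum.cong refl) (simp add: u_def the_inv_into_f_f[OF inj_e])
  also have "\<dots> = (\<lambda>x. \<Sum>C\<in>Pow D. c C * eA p D C x)" by (rule e_sum[symmetric])
  also have "\<dots> = 0"
  proof
    fix x show "(\<Sum>C\<in>Pow D. c C * eA p D C x) = 0 x"
      using c0 by (cases "x \<subseteq> D") (auto simp: eA_out)
  qed
  finally have s0: "(\<Sum>v\<in>E. ?sc (u v) v) = 0" .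
  have ind: "\<forall>S\<subseteq>E. finite S \<longrightarrow> (\<forall>u. (\<Sum>v\<in>S. ?sc (u v) v) = 0 \<longrightarrow> (\<forall>v\<in>S. u v = 0))"
    using E_ind unfolding fv.independent_explicit_finite_subsets .
  have "\<forall>v\<in>E. u v = 0"
    by (intro ballI) (rule ind[rule_format, OF subset_refl fE s0])
  moreover have "eA p D A \<in> E" using AD by (simp add: E_def)
  ultimately have "u (eA p D A) = 0" by blast
  then show ?thesis using AD by (simp add: u_def the_inv_into_f_f[OF inj_e])
qed

lemma part2:
  assumes "f \<in> RV D"
  shows "\<exists>!c. (\<forall>A. \<not> A \<subseteq> D \<longrightarrow> c A = 0) \<and> f = (\<lambda>x. \<Sum>A\<in>Pow D. c A * eA p D A x)"
proof -
  from SPD[OF spanning[OF subset_refl, of f]] obtain c0 where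
    c0: "\<forall>x. x \<subseteq> D \<longrightarrow> f (x \<inter> D) = (\<Sum>C\<in>Pow D. c0 C * eA p D C x)" ..
  define c where "c A = (if A \<subseteq> D then c0 A else 0)" for A
  have ex: "(\<forall>A. \<not> A \<subseteq> D \<longrightarrow> c A = 0) \<and> f = (\<lambda>x. \<Sum>A\<in>Pow D. c A * eA p D A x)"
  proof
    show "\<forall>A. \<not> A \<subseteq> D \<longrightarrow> c A = 0" by (simp add: c_def)
    show "f = (\<lambda>x. \<Sum>A\<in>Pow D. c A * eA p D A x)"
    proof
      fix x show "f x = (\<Sum>A\<in>Pow D. c A * eA p D A x)"
      proof (cases "x \<subseteq> D")
        case True
        then show ?thesis using c0 by (simp add: c_def Int_absorb2)
      next
        case False
        then show ?thesis using assms by (simp add: RV_def eA_out)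
      qed
    qed
  qed
  show ?thesis
  proof (rule ex1I[of _ c])
    show "(\<forall>A. \<not> A \<subseteq> D \<longrightarrow> c A = 0) \<and> f = (\<lambda>x. \<Sum>A\<in>Pow D. c A * eA p D A x)" by (rule ex)
  next
    fix c' assume c': "(\<forall>A. \<not> A \<subseteq> D \<longrightarrow> c' A = 0) \<and> f = (\<lambda>x. \<Sum>A\<in>Pow D. c' A * eA p D A x)"
    show "c' = c"
    proof
      fix A show "c' A = c A"
      proof (cases "A \<subseteq> D")
        case True
        have "\<And>x. x \<subseteq> D \<Longrightarrow> (\<Sum>B\<in>Pow D. (c' B - c B) * eA p D B x) = 0"
        proof -
          fix x
          have "(\<Sum>B\<in>Pow D. (c' B - c B) * eA p D B x) = (\<Sum>B\<in>Pow D. c' B * eA p D B x) - (\<Sum>B\<in>Pow D. c B * eA p D B x)"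
            by (simp add: left_diff_distrib sum_subtractf)
          also have "\<dots> = f x - f x"
          proof -
            have f1: "f = (\<lambda>x. \<Sum>A\<in>Pow D. c' A * eA p D A x)" using c' by (rule conjunct2)
            have f2: "f = (\<lambda>x. \<Sum>A\<in>Pow D. c A * eA p D A x)" using ex by (rule conjunct2)
            have "(\<Sum>B\<in>Pow D. c' B * eA p D B x) = f x" by (subst f1) (rule refl)
            moreover have "(\<Sum>B\<in>Pow D. c B * eA p D B x) = f x" by (subst f2) (rule refl)
            ultimately show ?thesis by simp
          qed
          finally show "(\<Sum>B\<in>Pow D. (c' B - c B) * eA p D B x) = 0" by simp
        qed
        from indep[OF this True] show ?thesis by simp
      next
        case False
        then show ?thesis using c' ex by simp
      qed
    qed
  qed
qed

end

theorem proposition4: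
  fixes d :: nat and p :: "nat set pmf"
  defines "D \<equiv> {1..d}"
  assumes "set_pmf p = Pow D"
  shows "(\<forall>A. A \<subseteq> D \<longrightarrow> Vsp p D A = {(\<lambda>x. c * eA p D A x) | c. True})
    \<and> (\<forall>f\<in>RV D. \<exists>!c. (\<forall>A. \<not> A \<subseteq> D \<longrightarrow> c A = 0)
                        \<and> f = (\<lambda>x. \<Sum>A\<in>Pow D. c A * eA p D A x))
    \<and> (\<forall>A B. A \<subseteq> D \<longrightarrow> B \<subset> A \<longrightarrow> ip p (eA p D A) (eA p D B) = 0)"
proof -
  interpret setting p D
    by unfold_locales (use assms in \<open>simp_all add: D_def\<close>)
  have 1: "\<forall>A. A \<subseteq> D \<longrightarrow> Vsp p D A = {(\<lambda>x. c * eA p D A x) | c. True}"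
    by (intro allI impI) (rule V_char)
  have 2: "\<forall>f\<in>RV D. \<exists>!c. (\<forall>A. \<not> A \<subseteq> D \<longrightarrow> c A = 0) \<and> f = (\<lambda>x. \<Sum>A\<in>Pow D. c A * eA p D A x)"
    by (intro ballI) (rule part2)
  have 3: "\<forall>A B. A \<subseteq> D \<longrightarrow> B \<subset> A \<longrightarrow> ip p (eA p D A) (eA p D B) = 0"
    by (intro allI impI) (rule part3)
  show ?thesis using 1 2 3 by (intro conjI)
qed

end
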